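(* Let $h > 0$, $c > 0$, and let $L, b$ be real numbers with $L > b > 0$. Define $\Phi : \mathbf{C} \to \mathbf{R}$ by $\Phi(s) = (\operatorname{Im} s)^2$ if $\operatorname{Re} s \leq 0$ and $\Phi(s) = (\operatorname{Im} s)^2 - (\operatorname{Re} s)^2$ if $\operatorname{Re} s \geq 0$. Let $F$ be an entire function satisfying $$e^{-\frac{\Phi(s)}{2h}}|F(s)| \leq 1 \quad \text{for all } s \in \mathbf{C}, \qquad e^{-\frac{\Phi(s)}{2h}}|F(s)| \leq e^{-\frac{c}{2h}} \quad \text{when } |s - L| \leq b.$$ Then for every $r \geq 0$ there exist $c' > 0$ and $\delta > 0$, depending only on $c, L, b, r$ (and not on $h$ or $F$), such that $$e^{-\frac{\Phi(s)}{2h}}|F(s)| \leq e^{-\frac{c'}{2h}} \quad \text{whenever } |\operatorname{Re} s| \leq \delta \text{ and } |\operatorname{Im} s| \leq r.$$ *)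

theory Defs
  imports "HOL-Analysis.Analysis"
begin

definition Phi :: "complex \<Rightarrow> real" where
  "Phi s = (if Re s \<le> 0 then (Im s)\<^sup>2 else (Im s)\<^sup>2 - (Re s)\<^sup>2)"

end

theory Submission
  imports Defs "HOL-Complex_Analysis.Complex_Analysis"
begin

lemma three_circ:
  fixes H :: "complex \<Rightarrow> complex"
  assumes hol: "H holomorphic_on cball 0 R" and r0: "0 < \<rho>" "\<rho> < R" and bp: "\<beta> > 0"
  and le1: "\<And>w. norm w \<le> R \<Longrightarrow> norm (H w) \<le> 1"
  and small: "\<And>w. norm w \<le> \<rho> \<Longrightarrow> norm(H w) \<le> exp(-\<beta>)"
  and t: "\<rho> \<le> t" "t \<le> R" and w: "norm w \<le> t"
  shows "norm (H w) \<le> exp (-\<beta> * ln (R/t) / (2 * ln (R/\<rho>)))"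
proof -
  have lRr: "ln (R/\<rho>) > 0" using r0 by simp
  have lRt: "0 \<le> ln (R/t)" "ln (R/t) \<le> ln (R/\<rho>)" using r0 t by (auto intro: divide_left_mono)
  show ?thesis
  proof (cases "norm w < \<rho>")
    case True
    have "\<beta> * ln (R/t) / (2 * ln (R/\<rho>)) \<le> \<beta>"
      using lRr lRt bp by (simp add: divide_simps mult_left_mono)
    then have "exp (-\<beta>) \<le> exp (-\<beta> * ln (R/t) / (2 * ln (R/\<rho>)))" by simp
    then show ?thesis using small[of w] True by linarith
  next
    case False
    define \<alpha> where "\<alpha> = \<beta> / ln (R/\<rho>)"
    have ap: "\<alpha> > 0" using lRr bp by (simp add: \<alpha>_def)
    define N where "N = nat \<lceil>2/\<alpha>\<rceil>"
    define K where "K = nat \<lfloor>N * \<alpha>\<rfloor>"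
    have c0: "0 \<le> \<lceil>2/\<alpha>\<rceil>" using ap by (simp add: order.strict_trans2[of "-1" 0])
    have "2/\<alpha> \<le> real N" unfolding N_def using c0 by (simp add: of_nat_nat)
    then have N2: "real N * \<alpha> \<ge> 2" using ap by (simp add: pos_divide_le_eq)
    have Npos: "N > 0" using N2 ap by (cases N) auto
    have K1: "real K \<le> N * \<alpha>" unfolding K_def using ap by (smt (verit) of_nat_0_le_iff floor_le_iff of_int_floor_le of_nat_nat zero_le_floor mult_nonneg_nonneg)
    have K2: "real K \<ge> N * \<alpha> - 1" unfolding K_def using ap
      by (smt (verit, ccfv_threshold) N2 of_int_floor_le of_nat_nat real_of_int_floor_gt_diff_one zero_le_floor)
    have K3: "real K / N \<ge> \<alpha> / 2" using K2 N2 Npos by (simp add: divide_simps) (smt (verit) mult.commute)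
    define \<Psi> where "\<Psi> z = H z ^ N * (of_real R / z) ^ K" for z
    define S where "S = cball (0::complex) R - ball 0 \<rho>"
    have clS: "closure S = S" unfolding S_def by (blast intro!: closure_closed)
    have inS: "interior S = ball 0 R - cball 0 \<rho>"
      unfolding S_def using r0 by (simp add: interior_diff)
    have "norm (\<Psi> w) \<le> 1"
    proof (rule maximum_modulus_frontier [of \<Psi> S])
      show "\<Psi> holomorphic_on interior S" unfolding inS \<Psi>_def using r0
        by (intro holomorphic_intros holomorphic_on_subset[OF hol]) auto
      show "continuous_on (closure S) \<Psi>" unfolding clS unfolding \<Psi>_def S_def using r0
        by (intro continuous_intros holomorphic_on_imp_continuous_on holomorphic_on_subset[OF hol]) auto
      show "bounded S" unfolding S_def by auto
      show "w \<in> S" unfolding S_def using False w t by auto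
      fix z assume "z \<in> frontier S"
      then have z: "norm z = R \<or> norm z = \<rho>" unfolding frontier_def clS inS unfolding S_def by auto
      have zne: "z \<noteq> 0" using z r0 by auto
      have "norm (\<Psi> z) = norm (H z) ^ N * (R / norm z) ^ K"
        unfolding \<Psi>_def using r0 by (simp add: norm_mult norm_power norm_divide)
      also have "\<dots> \<le> 1"
        using z
      proof
        assume zR: "norm z = R"
        then show ?thesis using le1[of z] r0 by (simp add: power_le_one)
      next
        assume zr: "norm z = \<rho>"
        have "norm (H z) ^ N \<le> exp (-\<beta>) ^ N"
          using small[of z] zr by (simp add: power_mono)
        also have "\<dots> = exp (- (N * \<beta>))" by (simp add: exp_of_nat_mult[symmetric])
        finally have a: "norm (H z) ^ N \<le> exp (- (N * \<beta>))" .
        have "(R / \<rho>) ^ K = exp (K * ln (R/\<rho>))" using r0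
          by (simp add: exp_of_nat_mult)
        also have "\<dots> \<le> exp (N * \<beta>)" using K1 lRr
          by (simp add: \<alpha>_def) (smt (verit) mult_right_mono nonzero_eq_divide_eq times_divide_eq_right)
        finally have b: "(R / \<rho>) ^ K \<le> exp (N * \<beta>)" .
        have "norm (H z) ^ N * (R / norm z) ^ K \<le> exp (- (N * \<beta>)) * exp (N * \<beta>)"
          using a b zr r0 by (intro mult_mono) auto
        then show ?thesis by (simp add: exp_minus field_simps)
      qed
      finally show "norm (\<Psi> z) \<le> 1" .
    qed
    moreover have wpos: "norm w > 0" using False r0 by linarith
    ultimately have A: "norm (H w) ^ N * (R / norm w) ^ K \<le> 1"
      unfolding \<Psi>_def using r0 by (simp add: norm_mult norm_power norm_divide)
    have "(R / norm w) ^ K > 0" using wpos r0 by simp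
    then have "norm (H w) ^ N \<le> 1 / (R / norm w) ^ K" using A by (simp add: pos_le_divide_eq)
    also have "\<dots> = (norm w / R) ^ K" by (simp add: power_divide)
    also have "\<dots> \<le> (t / R) ^ K" using w wpos r0 by (intro power_mono divide_right_mono) auto
    also have "\<dots> = exp (K * ln (t/R))" using r0 t by (simp add: exp_of_nat_mult)
    also have "\<dots> = exp (- (K * ln (R/t)))" using r0 t by (simp add: ln_div algebra_simps)
    finally have B: "norm (H w) ^ N \<le> exp (- (K * ln (R/t)))" .
    define E where "E = exp (- (K / N * ln (R/t)))"
    have EN: "E ^ N = exp (- (K * ln (R/t)))" unfolding E_def using Npos
      by (simp add: exp_of_nat_mult[symmetric])
    have C: "norm (H w) \<le> E"
    proof (rule ccontr)
      assume "\<not> norm (H w) \<le> E"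
      then have "E ^ N < norm (H w) ^ N" using Npos by (intro power_strict_mono) (auto simp: E_def)
      then show False using B EN by simp
    qed
    have "\<alpha> / 2 * ln (R/t) \<le> K / N * ln (R/t)" using K3 lRt by (intro mult_right_mono) auto
    then have "E \<le> exp (- (\<alpha> / 2 * ln (R/t)))" unfolding E_def by simp
    also have "\<dots> = exp (-\<beta> * ln (R/t) / (2 * ln (R/\<rho>)))" unfolding \<alpha>_def by (simp add: field_simps)
    finally show ?thesis using C by linarith
  qed
qed
lemma re_cayley:
  fixes u :: complex assumes "norm u < 1"
  shows "Re ((1+u)/(1-u)) \<ge> 0"
proof -
  have "(Re u)^2 + (Im u)^2 < 1" proof -
    have "(cmod u)^2 < 1" using assms by (simp add: abs_square_less_1)
    then show ?thesis by (simp add: cmod_power2)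
  qed
  moreover have d: "0 \<le> (1 - Re u)*(1 - Re u) + Im u * Im u" by simp
  ultimately show ?thesis unfolding Re_divide
    by (intro divide_nonneg_nonneg) (auto simp: power2_eq_square algebra_simps)
qed

lemma cayley_near:
  fixes u :: complex assumes "norm u \<le> 1/2"
  shows "norm ((1+u)/(1-u) - 1) \<le> 4 * norm u"
proof -
  have ne: "1 - u \<noteq> 0" using assms by auto
  have "(1+u)/(1-u) - 1 = 2*u/(1-u)" using ne by (simp add: field_simps)
  moreover have "norm (1 - u) \<ge> 1/2" using assms norm_triangle_ineq2[of 1 u] by simp
  ultimately have "norm ((1+u)/(1-u) - 1) = 2 * norm u / norm (1-u)" by (simp add: norm_divide norm_mult)
  also have "\<dots> \<le> 2 * norm u / (1/2)" using \<open>norm (1 - u) \<ge> 1/2\<close> by (intro divide_left_mono) auto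
  finally show ?thesis by simp
qed

lemma cayley_inv:
  fixes s :: complex and L e :: real
  assumes "s + of_real (L + 2*e) \<noteq> 0" "L + e \<noteq> 0"
  shows "- of_real e + of_real (L+e) * ((1 + (s - of_real L)/(s + of_real (L+2*e)))
          / (1 - (s - of_real L)/(s + of_real (L+2*e)))) = s"
proof -
  have a: "1 + (s - of_real L)/(s + of_real (L+2*e)) = 2 * (s + of_real e)/(s + of_real (L+2*e))"
    using assms(1) by (simp add: field_simps)
  have b: "1 - (s - of_real L)/(s + of_real (L+2*e)) = 2 * of_real (L + e)/(s + of_real (L+2*e))"
    using assms(1) by (simp add: field_simps)
  have c: "(of_real (L+e)::complex) \<noteq> 0" by (metis assms(2) of_real_eq_0_iff)
  have gen: "\<And>P D X :: complex. P \<noteq> 0 \<Longrightarrow> D \<noteq> 0 \<Longrightarrow> P * ((2 * X / D) / (2 * P / D)) = X"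
    by (simp add: field_simps)
  show ?thesis unfolding a b gen[OF c assms(1)] by simp
qed

lemma ratio_bound:
  fixes x y L e r :: real
  assumes "\<bar>x\<bar> \<le> e/2" "\<bar>y\<bar> \<le> r" "0 < e" "e \<le> L"
  shows "((x-L)^2 + y^2) / ((x+L+2*e)^2 + y^2) \<le> ((L+e/2)^2 + r^2)/((L+3*e/2)^2 + r^2)"
proof -
  define A where "A = (L+e/2)^2" define B where "B = (L+3*e/2)^2"
  have 1: "(x-L)^2 \<le> A" unfolding A_def using assms by (intro power2_le_iff_abs_le[THEN iffD2]) auto
  have 2: "B \<le> (x+L+2*e)^2" unfolding B_def using assms by (intro power2_le_iff_abs_le[THEN iffD2]) auto
  have AB: "A \<le> B" unfolding A_def B_def using assms by (intro power_mono) auto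
  have Bp: "B > 0" unfolding B_def using assms by simp
  have y2: "y^2 \<le> r^2" using assms by (metis power2_abs power_mono abs_ge_zero)
  have "((x-L)^2 + y^2) / ((x+L+2*e)^2 + y^2) \<le> (A + y^2) / (B + y^2)"
    using 1 2 Bp by (intro frac_le) (auto intro: add_nonneg_nonneg add_pos_nonneg simp: A_def)
  also have "\<dots> \<le> (A + r^2) / (B + r^2)"
  proof -
    have "(A + y^2) * (B + r^2) \<le> (A + r^2) * (B + y^2)"
    proof -
      have "(r^2 - y^2) * (B - A) \<ge> 0" using y2 AB by simp
      then show ?thesis by (simp add: algebra_simps)
    qed
    then show ?thesis using Bp by (simp add: divide_simps add_pos_nonneg)
  qed
  finally show ?thesis unfolding A_def B_def .
qed

theorem lemma4p1:
  fixes c L b r :: real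
  assumes "c > 0" and "b > 0" and "L > b" and "r \<ge> 0"
  shows "\<exists>c' \<delta>. c' > 0 \<and> \<delta> > 0 \<and>
    (\<forall>(h::real) (F::complex \<Rightarrow> complex).
       h > 0 \<longrightarrow> F holomorphic_on UNIV \<longrightarrow>
       (\<forall>s. exp (- Phi s / (2*h)) * cmod (F s) \<le> 1) \<longrightarrow>
       (\<forall>s. cmod (s - of_real L) \<le> b \<longrightarrow>
            exp (- Phi s / (2*h)) * cmod (F s) \<le> exp (- c / (2*h))) \<longrightarrow>
       (\<forall>s. \<bar>Re s\<bar> \<le> \<delta> \<and> \<bar>Im s\<bar> \<le> r \<longrightarrow>
            exp (- Phi s / (2*h)) * cmod (F s) \<le> exp (- c' / (2*h))))"
proof -
  note cp = assms(1) and bp = assms(2) and Lb = assms(3) and rp = assms(4)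
  have Lp: "L > 0" using bp Lb by linarith
  define D0 where "D0 = (5*L/2)^2 + r^2"
  define \<Lambda> where "\<Lambda> = ln (8*L/b)"
  define \<epsilon> where "\<epsilon> = min L (c*L/(8*D0*\<Lambda>))"
  define A where "A = (L+\<epsilon>/2)^2"
  define B where "B = (L+3*\<epsilon>/2)^2"
  define q where "q = (A + r^2)/(B + r^2)"
  define t where "t = sqrt q"
  define R where "R = sqrt t"
  define \<rho> where "\<rho> = b/(4*(L+\<epsilon>))"
  define K1 where "K1 = ln (R/t) / (2 * ln (R/\<rho>))"
  define c' where "c' = c*K1 - \<epsilon>^2"
  have D0p: "D0 > 0" unfolding D0_def using Lp by (simp add: add_pos_nonneg)
  have \<Lambda>p: "\<Lambda> > 0" unfolding \<Lambda>_def using Lb bp by (simp add: pos_divide_less_eq) 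
  have \<epsilon>p: "\<epsilon> > 0" unfolding \<epsilon>_def using Lp cp D0p \<Lambda>p by simp
  have \<epsilon>L: "\<epsilon> \<le> L" unfolding \<epsilon>_def by simp
  have \<epsilon>b: "\<epsilon> * (8*D0*\<Lambda>) \<le> c*L"
  proof -
    have "\<epsilon> \<le> c*L/(8*D0*\<Lambda>)" unfolding \<epsilon>_def by simp
    then show ?thesis using D0p \<Lambda>p by (simp add: pos_le_divide_eq)
  qed
  have A0: "A \<ge> L^2" unfolding A_def using \<epsilon>p Lp by (intro power_mono) auto
  have AB: "A < B" unfolding A_def B_def using \<epsilon>p Lp by (intro power_strict_mono) auto
  have B0: "B \<le> (5*L/2)^2" unfolding B_def using \<epsilon>p \<epsilon>L Lp by (intro power_mono) auto
  have Bp: "B > 0" using AB A0 Lp by (smt (verit) zero_le_power2)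
  have BA: "B - A = 2*L*\<epsilon> + 2*\<epsilon>^2" unfolding A_def B_def by (simp add: power2_eq_square algebra_simps)
  have q1: "q < 1" unfolding q_def using AB Bp rp by (simp add: divide_less_eq add_pos_nonneg)
  have q0: "q \<ge> 4/25"
  proof -
    have r2: "0 \<le> 21*r^2" by simp
    have b4: "4*B \<le> 25*L^2" using B0 by (simp add: power_divide)
    have "4*(B + r^2) \<le> 25*(A + r^2)" using A0 b4 r2 by (smt (verit))
    then show ?thesis unfolding q_def using Bp by (simp add: divide_simps add_pos_nonneg)
  qed
  have t0: "t \<ge> 2/5" unfolding t_def by (rule real_le_rsqrt) (use q0 in \<open>simp add: power_divide\<close>)
  have t1: "t < 1" unfolding t_def using q1 q0 by simp
  have tR: "t < R" "R < 1" "t = R^2" unfolding R_def using t0 t1 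
    by (auto simp: real_less_rsqrt power2_eq_square mult_less_cancel_left1 intro: less_le_trans)
  have \<rho>0: "\<rho> > 0" unfolding \<rho>_def using bp \<epsilon>p Lp by simp
  have \<rho>1: "\<rho> < 1/4" unfolding \<rho>_def using Lb \<epsilon>p bp by (simp add: divide_simps)
  have \<rho>t: "\<rho> < t" using \<rho>1 t0 by linarith
  have Rpos: "R > 0" using tR \<rho>t \<rho>0 by linarith
  have lnRt: "ln (R/t) = - ln q / 4"
  proof -
    have "R / t = 1 / R" using tR Rpos by (simp add: power2_eq_square)
    then have "ln (R/t) = - ln R" using Rpos by (simp add: ln_div)
    also have "\<dots> = - ln q / 4" unfolding R_def t_def using q0 by (simp add: ln_sqrt)
    finally show ?thesis .
  qed
  have lnq: "- ln q \<ge> 2*L*\<epsilon>/D0"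
  proof -
    have Br: "B + r^2 \<noteq> 0" using Bp by (smt (verit) zero_le_power2)
    have "1 - q = (B - A)/(B + r^2)" unfolding q_def using Br by (simp add: field_simps)
    also have "\<dots> \<ge> (2*L*\<epsilon>)/D0" unfolding BA D0_def using B0 Bp \<epsilon>p Lp
      by (intro frac_le) (auto simp: add_pos_nonneg)
    finally have "1 - q \<ge> 2*L*\<epsilon>/D0" .
    moreover have "ln q \<le> q - 1" using q0 by (intro ln_le_minus_one) auto
    ultimately show ?thesis by linarith
  qed
  have lnR\<rho>: "0 < ln (R/\<rho>)" "ln (R/\<rho>) \<le> \<Lambda>"
  proof -
    show "0 < ln (R/\<rho>)" using \<rho>t tR \<rho>0 by simp
    have "R / \<rho> \<le> 1 / \<rho>" using tR \<rho>0 by (simp add: divide_right_mono)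
    also have "\<dots> = 4*(L+\<epsilon>)/b" unfolding \<rho>_def by simp
    also have "\<dots> \<le> 8*L/b" using \<epsilon>L bp by (simp add: divide_right_mono)
    finally show "ln (R/\<rho>) \<le> \<Lambda>" unfolding \<Lambda>_def using \<rho>0 Rpos by (intro ln_mono) auto
  qed
  have K1b: "K1 \<ge> L*\<epsilon>/(4*D0*\<Lambda>)"
  proof -
    have "L*\<epsilon>/(4*D0*\<Lambda>) = (2*L*\<epsilon>/D0/4) / (2*\<Lambda>)" by (simp add: field_simps)
    also have "\<dots> \<le> ln (R/t) / (2 * ln (R/\<rho>))" unfolding lnRt using lnq lnR\<rho> \<Lambda>p D0p Lp \<epsilon>p q0 q1
      by (intro frac_le) auto
    finally show ?thesis unfolding K1_def .
  qed
  have K1p: "K1 \<ge> 0" using K1b Lp \<epsilon>p D0p \<Lambda>p by (smt (verit) divide_pos_pos mult_pos_pos)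
  have c'p: "c' \<ge> \<epsilon>^2"
  proof -
    have "c * (L*\<epsilon>/(4*D0*\<Lambda>)) \<ge> 2*\<epsilon>^2"
    proof -
      have "2*\<epsilon>^2 * (4*D0*\<Lambda>) = \<epsilon> * (\<epsilon> * (8*D0*\<Lambda>))" by (simp add: power2_eq_square)
      also have "\<dots> \<le> \<epsilon> * (c*L)" using \<epsilon>b \<epsilon>p by (intro mult_left_mono) auto
      finally show ?thesis using D0p \<Lambda>p by (simp add: pos_le_divide_eq algebra_simps)
    qed
    moreover have "c * (L*\<epsilon>/(4*D0*\<Lambda>)) \<le> c * K1" using K1b cp by (intro mult_left_mono) auto
    ultimately show ?thesis unfolding c'_def by (smt (verit) zero_le_power2)
  qed
  have c'pos: "c' > 0" using c'p \<epsilon>p by (smt (verit) zero_less_power)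
  show ?thesis
  proof (intro exI conjI allI impI)
    show "c' > 0" by (fact c'pos)
    show "\<epsilon>/2 > 0" using \<epsilon>p by simp
    fix h :: real and F :: "complex \<Rightarrow> complex" and s :: complex
    assume hp: "h > 0" and holF: "F holomorphic_on UNIV"
      and F1: "\<forall>s. exp (- Phi s / (2*h)) * cmod (F s) \<le> 1"
      and F2: "\<forall>s. cmod (s - of_real L) \<le> b \<longrightarrow> exp (- Phi s / (2*h)) * cmod (F s) \<le> exp (- c / (2*h))"
      and sT: "\<bar>Re s\<bar> \<le> \<epsilon>/2 \<and> \<bar>Im s\<bar> \<le> r"
    define G where "G z = F z * exp (z^2 / (2 * of_real h))" for z
    define P where "P z = (if Re z \<le> 0 then (Re z)^2 else 0)" for z
    have P0: "P z \<ge> 0" for z unfolding P_def by simp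
    have normG: "norm (G z) = exp (- Phi z / (2*h)) * cmod (F z) * exp (P z / (2*h))" for z
    proof -
      have "Re (z^2 / (2 * of_real h)) = ((Re z)^2 - (Im z)^2) / (2*h)"
        using hp by (simp add: Re_divide power2_eq_square field_simps)
      then have "norm (G z) = cmod (F z) * exp (((Re z)^2 - (Im z)^2) / (2*h))"
        unfolding G_def by (simp add: norm_mult norm_exp_eq_Re)
      also have "((Re z)^2 - (Im z)^2) / (2*h) = - Phi z / (2*h) + P z / (2*h)"
        unfolding Phi_def P_def using hp by (auto simp: field_simps)
      finally show ?thesis by (simp only: exp_add mult_ac)
    qed
    have holG: "G holomorphic_on UNIV" unfolding G_def
      using hp by (intro holomorphic_intros holF) auto
    have G1: "norm (G z) \<le> exp (\<epsilon>^2/(2*h))" if "Re z \<ge> -\<epsilon>" for z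
    proof -
      have "P z \<le> \<epsilon>^2"
      proof (cases "Re z \<le> 0")
        case True
        then have "\<bar>Re z\<bar> \<le> \<bar>\<epsilon>\<bar>" using that by simp
        then have "(Re z)^2 \<le> \<epsilon>^2" by (simp only: abs_le_square_iff)
        then show ?thesis unfolding P_def using True by simp
      qed (simp add: P_def)
      then have e: "exp (P z / (2*h)) \<le> exp (\<epsilon>^2/(2*h))" using hp by (simp add: divide_right_mono)
      have f: "exp (- Phi z / (2*h)) * cmod (F z) \<le> 1" using F1 by blast
      have "norm (G z) \<le> 1 * exp (\<epsilon>^2/(2*h))" unfolding normG
        by (rule mult_mono[OF f e]) auto
      then show ?thesis by simp
    qed
    have G2: "norm (G z) \<le> exp (- c/(2*h))" if "cmod (z - of_real L) \<le> b" for z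
    proof -
      have "\<bar>Re z - L\<bar> \<le> b" using abs_Re_le_cmod[of "z - of_real L"] that by simp
      then have "P z = 0" unfolding P_def using Lb by auto
      then show ?thesis unfolding normG using F2 that by simp
    qed
    define T where "T u = - of_real \<epsilon> + of_real (L+\<epsilon>) * ((1+u)/(1-u))" for u :: complex
    define H where "H u = G (T u) * of_real (exp (- (\<epsilon>^2)/(2*h)))" for u
    define \<beta> where "\<beta> = (c + \<epsilon>^2)/(2*h)"
    have \<beta>p: "\<beta> > 0" unfolding \<beta>_def using cp hp by (simp add: add_pos_nonneg)
    have holT: "T holomorphic_on cball 0 R" unfolding T_def
    proof (intro holomorphic_intros)
      fix u :: complex assume "u \<in> cball 0 R"
      then show "1 - u \<noteq> 0" using tR by auto
    qed
    have holH: "H holomorphic_on cball 0 R"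
    proof -
      have "(G \<circ> T) holomorphic_on cball 0 R"
        by (rule holomorphic_on_compose[OF holT holomorphic_on_subset[OF holG]]) auto
      then show ?thesis unfolding H_def o_def by (intro holomorphic_intros) auto
    qed
    have normH: "norm (H u) = norm (G (T u)) * exp (- (\<epsilon>^2)/(2*h))" for u
      unfolding H_def by (simp add: norm_mult)
    have H1: "norm (H u) \<le> 1" if "norm u \<le> R" for u
    proof -
      define w where "w = (1+u)/(1-u)"
      have "Re w \<ge> 0" unfolding w_def using that tR by (intro re_cayley) auto
      moreover have "Re (T u) = -\<epsilon> + (L+\<epsilon>) * Re w" unfolding T_def w_def[symmetric]
        by (simp add: algebra_simps)
      ultimately have "Re (T u) \<ge> - \<epsilon>" using \<epsilon>p Lp by simp
      then have "norm (G (T u)) \<le> exp (\<epsilon>^2/(2*h))" by (rule G1)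
      then have "norm (H u) \<le> exp (\<epsilon>^2/(2*h)) * exp (- (\<epsilon>^2)/(2*h))" unfolding normH
        by (simp add: mult_right_mono)
      also have "\<dots> = 1" by (simp flip: exp_add)
      finally show ?thesis .
    qed
    have H2: "norm (H u) \<le> exp (-\<beta>)" if "norm u \<le> \<rho>" for u
    proof -
      have "norm ((1+u)/(1-u) - 1) \<le> 4 * norm u" using that \<rho>1 by (intro cayley_near) auto
      moreover have "T u - of_real L = of_real (L+\<epsilon>) * ((1+u)/(1-u) - 1)" unfolding T_def
        by (simp add: algebra_simps)
      moreover have n: "cmod (of_real (L+\<epsilon>) :: complex) = L+\<epsilon>" using Lp \<epsilon>p
        by (simp only: norm_of_real)
      ultimately have "cmod (T u - of_real L) \<le> (L+\<epsilon>) * (4 * norm u)" using Lp \<epsilon>p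
        by (simp only: norm_mult n) (simp add: mult_left_mono)
      also have "\<dots> \<le> (L+\<epsilon>) * (4 * \<rho>)" using that Lp \<epsilon>p by (intro mult_left_mono) auto
      also have "\<dots> = b" unfolding \<rho>_def using Lp \<epsilon>p by (simp add: field_simps)
      finally have "norm (G (T u)) \<le> exp (- c/(2*h))" by (rule G2)
      then have "norm (H u) \<le> exp (- c/(2*h)) * exp (- (\<epsilon>^2)/(2*h))" unfolding normH
        by (simp add: mult_right_mono)
      also have "\<dots> = exp (-\<beta>)" unfolding \<beta>_def by (simp add: add_divide_distrib flip: exp_add)
      finally show ?thesis .
    qed
    define u where "u = (s - of_real L)/(s + of_real (L+2*\<epsilon>))"
    have den: "s + of_real (L+2*\<epsilon>) \<noteq> 0"
    proof
      assume "s + of_real (L+2*\<epsilon>) = 0"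
      then have "Re (s + of_real (L+2*\<epsilon>)) = 0" by simp
      then show False using sT \<epsilon>p Lp by simp
    qed
    have Tu: "T u = s" unfolding T_def u_def using cayley_inv[OF den] Lp \<epsilon>p by simp
    have ut: "norm u \<le> t"
    proof -
      have "(norm u)^2 = ((Re s - L)^2 + (Im s)^2) / ((Re s + L + 2*\<epsilon>)^2 + (Im s)^2)"
        unfolding u_def by (simp add: norm_divide power_divide cmod_power2 add.assoc)
      also have "\<dots> \<le> q" unfolding q_def A_def B_def using sT \<epsilon>p \<epsilon>L by (intro ratio_bound) auto
      finally show ?thesis unfolding t_def by (rule real_le_rsqrt)
    qed
    have "norm (H u) \<le> exp (-\<beta> * ln (R/t) / (2 * ln (R/\<rho>)))"
      by (rule three_circ[OF holH \<rho>0 _ \<beta>p H1 H2 _ _ ut]) (use \<rho>t tR in auto)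
    also have "-\<beta> * ln (R/t) / (2 * ln (R/\<rho>)) = - (\<beta> * K1)" unfolding K1_def by simp
    finally have Hb: "norm (H u) \<le> exp (- (\<beta> * K1))" .
    have "norm (G s) = norm (H u) * exp (\<epsilon>^2/(2*h))" unfolding normH Tu
      by (simp flip: exp_add)
    also have "\<dots> \<le> exp (- (\<beta> * K1)) * exp (\<epsilon>^2/(2*h))" using Hb by (simp add: mult_right_mono)
    also have "\<dots> = exp ((\<epsilon>^2 - (c + \<epsilon>^2) * K1) / (2*h))" unfolding \<beta>_def
      using hp by (simp add: field_simps flip: exp_add)
    also have "\<dots> \<le> exp (- c' / (2*h))"
    proof -
      have "\<epsilon>^2 - (c + \<epsilon>^2) * K1 \<le> - c'" unfolding c'_def using K1p
        by (simp add: algebra_simps)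
      then have "(\<epsilon>^2 - (c + \<epsilon>^2) * K1) / (2*h) \<le> (- c') / (2*h)"
        by (rule divide_right_mono) (use hp in auto)
      then show ?thesis by simp
    qed
    finally have Gs: "norm (G s) \<le> exp (- c' / (2*h))" .
    have e1: "1 \<le> exp (P s / (2*h))" using P0[of s] hp by simp
    have "exp (- Phi s / (2*h)) * cmod (F s) * 1 \<le> norm (G s)" unfolding normG
      by (rule mult_left_mono[OF e1]) simp
    then have "exp (- Phi s / (2*h)) * cmod (F s) \<le> norm (G s)" by simp
    then show "exp (- Phi s / (2*h)) * cmod (F s) \<le> exp (- c' / (2*h))" using Gs by linarith
  qed
qed

end
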